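(* Consider an interventional factor model (IFM) with factor structure $\{(S_k, F_k)\}_{k=1}^{l}$ over intervention variables $\sigma = (\sigma_1, \dots, \sigma_d)$, and suppose its $\sigma$-graph $\mathcal G_{\sigma}$ is decomposable. Let $\Sigma_{\mathrm{train}} \subseteq \Sigma$ satisfy the following. For every $k \in \{1, \dots, l\}$ and every assignment $v \in \prod_{i \in F_k} \{0, 1, \dots, \aleph_i - 1\}$, the regime $\sigma$ with $\sigma_{F_k} = v$ and $\sigma_i = 0$ for all $i \notin F_k$ belongs to $\Sigma_{\mathrm{train}}$. Then, for every $\sigma^\star \in \Sigma$, the distribution $p(\cdot\,; \sigma^\star)$ is identified from $\{p(\cdot\,; \sigma) : \sigma \in \Sigma_{\mathrm{train}}\}$.
   Context: **Regimes.** There are $d$ intervention variables $\sigma_1, \dots, \sigma_d$. These are non-random regime indicators. Each $\sigma_i$ takes values in $\{0, 1, \dots, \aleph_i - 1\}$, where $\aleph_i \ge 2$ and the value $0$ denotes the baseline, i.e. no intervention. The regime space is $\Sigma = \prod_{i=1}^d \{0, \dots, \aleph_i - 1\}$. For $A \subseteq [d] = \{1, \dots, d\}$, write $\sigma_A = (\sigma_i)_{i \in A}$. **The random system.** $X = (X_1, \dots, X_m)$ is a random vector with sample space $\mathcal X$. For $S \subseteq [m]$, write $x_S = (x_j)_{j \in S}$. **Interventional factor model (IFM).** An IFM with factor structure $\{(S_k, F_k)\}_{k=1}^l$, where $S_k \subseteq [m]$ and $F_k \subseteq [d]$, is a family of distributions $\{p(\cdot\,; \sigma) : \sigma \in \Sigma\}$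 on $\mathcal X$ whose densities (or probability mass functions) satisfy $$p(x; \sigma) = \frac{1}{Z(\sigma)} \prod_{k=1}^l f_k(x_{S_k}; \sigma_{F_k}).$$ Here each $f_k$ is a strictly positive function of $(x_{S_k}, \sigma_{F_k})$, and $Z(\sigma) \in (0, \infty)$ is the normalizing constant. **$\sigma$-graph.** The $\sigma$-graph $\mathcal G_\sigma$ is the undirected graph with vertex set $\{\sigma_1, \dots, \sigma_d\}$. It has an edge $\sigma_i - \sigma_j$ ($i \ne j$) if and only if $\{i, j\} \subseteq F_k$ for some $k$. **Decomposable graphs.** An undirected graph is decomposable if it is complete, or if its vertex set can be partitioned into $(A, B, C)$ with $A, B$ nonempty, $C$ a clique separating $A$ from $B$, and the induced subgraphs on $A \cup C$ and $B \cup C$ both decomposable. **Identification.** $p(\cdot\,; \sigma^\star)$ is identified from $\Sigma_{\mathrm{train}}$ if the following holds for any two IFMs $p, p'$ with the same factor structure: whenever $p(\cdot\,; \sigma) = p'(\cdot\,; \sigma)$ for all $\sigma \in \Sigma_{\mathrm{train}}$, then $p(\cdot\,; \sigma^\star) = p'(\cdot\,; \sigma^\star)$. *)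

theory Defs
  imports "HOL-Analysis.Analysis"
begin

definition regimes :: "nat \<Rightarrow> (nat \<Rightarrow> nat) \<Rightarrow> (nat \<Rightarrow> nat) set" where
  "regimes d aleph = {\<sigma>. \<forall>i. (i \<in> {1..d} \<longrightarrow> \<sigma> i < aleph i) \<and> (i \<notin> {1..d} \<longrightarrow> \<sigma> i = 0)}"

text \<open>Interventional factor model: p sigma x is the density (w.r.t. base measure M on the sample
  space, space M) of X under regime sigma.  Sample points x :: nat => 'a, x_S = restrict x S.\<close>
definition is_IFM ::
  "(nat \<Rightarrow> 'a) measure \<Rightarrow> nat \<Rightarrow> nat \<Rightarrow> (nat \<Rightarrow> nat) \<Rightarrow> nat \<Rightarrow> (nat \<Rightarrow> nat set) \<Rightarrow> (nat \<Rightarrow> nat set)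
   \<Rightarrow> ((nat \<Rightarrow> nat) \<Rightarrow> (nat \<Rightarrow> 'a) \<Rightarrow> real) \<Rightarrow> bool" where
  "is_IFM M m d aleph l S F p \<longleftrightarrow>
     (\<exists>(f :: nat \<Rightarrow> (nat \<Rightarrow> 'a) \<Rightarrow> (nat \<Rightarrow> nat) \<Rightarrow> real) (Z :: (nat \<Rightarrow> nat) \<Rightarrow> real).
        \<forall>\<sigma> \<in> regimes d aleph.
          0 < Z \<sigma> \<and>
          (\<forall>k \<in> {1..l}. \<forall>x \<in> space M. 0 < f k (restrict x (S k)) (restrict \<sigma> (F k))) \<and>
          (\<forall>k \<in> {1..l}. (\<lambda>x. f k (restrict x (S k)) (restrict \<sigma> (F k))) \<in> borel_measurable M) \<and>
          (\<integral>\<^sup>+ x. ennreal (\<Prod>k\<in>{1..l}. f k (restrict x (S k)) (restrict \<sigma> (F k))) \<partial>M) = ennreal (Z \<sigma>) \<and>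
          (\<forall>x \<in> space M. p \<sigma> x = (\<Prod>k\<in>{1..l}. f k (restrict x (S k)) (restrict \<sigma> (F k))) / Z \<sigma>))"

definition valid_structure :: "nat \<Rightarrow> nat \<Rightarrow> (nat \<Rightarrow> nat) \<Rightarrow> nat \<Rightarrow> (nat \<Rightarrow> nat set) \<Rightarrow> (nat \<Rightarrow> nat set) \<Rightarrow> bool" where
  "valid_structure m d aleph l S F \<longleftrightarrow>
     (\<forall>i \<in> {1..d}. 2 \<le> aleph i) \<and> (\<forall>k \<in> {1..l}. S k \<subseteq> {1..m} \<and> F k \<subseteq> {1..d})"

definition identified ::
  "(nat \<Rightarrow> 'a) measure \<Rightarrow> nat \<Rightarrow> nat \<Rightarrow> (nat \<Rightarrow> nat) \<Rightarrow> nat \<Rightarrow> (nat \<Rightarrow> nat set) \<Rightarrow> (nat \<Rightarrow> nat set)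
   \<Rightarrow> (nat \<Rightarrow> nat) set \<Rightarrow> (nat \<Rightarrow> nat) \<Rightarrow> bool" where
  "identified M m d aleph l S F Strain \<sigma>s \<longleftrightarrow>
     (\<forall>p p'. is_IFM M m d aleph l S F p \<longrightarrow> is_IFM M m d aleph l S F p' \<longrightarrow>
        (\<forall>\<sigma> \<in> Strain. \<forall>x \<in> space M. p \<sigma> x = p' \<sigma> x) \<longrightarrow>
        (\<forall>x \<in> space M. p \<sigma>s x = p' \<sigma>s x))"

definition sigma_edge :: "nat \<Rightarrow> (nat \<Rightarrow> nat set) \<Rightarrow> nat \<Rightarrow> nat \<Rightarrow> bool" where
  "sigma_edge l F i j \<longleftrightarrow> i \<noteq> j \<and> (\<exists>k \<in> {1..l}. {i, j} \<subseteq> F k)"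

text \<open>Undirected graphs given by a symmetric edge relation E, with vertex set V (induced subgraph).\<close>
definition is_clique :: "('v \<Rightarrow> 'v \<Rightarrow> bool) \<Rightarrow> 'v set \<Rightarrow> bool" where
  "is_clique E C \<longleftrightarrow> (\<forall>i \<in> C. \<forall>j \<in> C. i \<noteq> j \<longrightarrow> E i j)"

definition is_path :: "('v \<Rightarrow> 'v \<Rightarrow> bool) \<Rightarrow> 'v set \<Rightarrow> 'v list \<Rightarrow> bool" where
  "is_path E V xs \<longleftrightarrow> xs \<noteq> [] \<and> set xs \<subseteq> V \<and> (\<forall>i < length xs - 1. E (xs ! i) (xs ! Suc i))"

definition separates :: "('v \<Rightarrow> 'v \<Rightarrow> bool) \<Rightarrow> 'v set \<Rightarrow> 'v set \<Rightarrow> 'v set \<Rightarrow> 'v set \<Rightarrow> bool" where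
  "separates E V C A B \<longleftrightarrow>
     (\<forall>xs. is_path E V xs \<longrightarrow> hd xs \<in> A \<longrightarrow> last xs \<in> B \<longrightarrow> set xs \<inter> C \<noteq> {})"

inductive decomposable :: "('v \<Rightarrow> 'v \<Rightarrow> bool) \<Rightarrow> 'v set \<Rightarrow> bool" for E where
  complete: "is_clique E V \<Longrightarrow> decomposable E V"
| split: "\<lbrakk> V = A \<union> B \<union> C; A \<inter> B = {}; A \<inter> C = {}; B \<inter> C = {};
            A \<noteq> {}; B \<noteq> {}; is_clique E C; separates E V C A B;
            decomposable E (A \<union> C); decomposable E (B \<union> C) \<rbrakk> \<Longrightarrow> decomposable E V"

end

theory Submission
  imports Defs
begin


definition zr :: "(nat\<Rightarrow>nat) \<Rightarrow> nat set \<Rightarrow> nat \<Rightarrow> nat" where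
  "zr \<sigma> T = (\<lambda>i. if i \<in> T then \<sigma> i else 0)"

lemma alt_zero:
  fixes g :: "(nat \<Rightarrow> nat) \<Rightarrow> real"
  assumes "finite U" "i \<in> U" "i \<notin> F"
  shows "(\<Sum>T\<in>Pow U. (-1::real)^card(U-T) * g (restrict (zr \<sigma> T) F)) = 0"
proof -
  let ?V = "U - {i}"
  have U: "U = insert i ?V" using assms by auto
  have fV: "finite ?V" using assms by auto
  let ?t = "\<lambda>T. (-1::real)^card(U-T) * g (restrict (zr \<sigma> T) F)"
  have disj: "Pow ?V \<inter> insert i ` Pow ?V = {}" by auto
  have inj: "inj_on (insert i) (Pow ?V)" by (rule inj_onI) auto
  have "(\<Sum>T\<in>Pow U. ?t T) = (\<Sum>T\<in>Pow ?V. ?t T) + (\<Sum>T\<in>insert i ` Pow ?V. ?t T)"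
    by (subst U, subst Pow_insert, rule sum.union_disjoint) (use fV disj in auto)
  also have "(\<Sum>T\<in>insert i ` Pow ?V. ?t T) = (\<Sum>T\<in>Pow ?V. ?t (insert i T))"
    using inj by (simp add: sum.reindex)
  also have "(\<Sum>T\<in>Pow ?V. ?t (insert i T)) = (\<Sum>T\<in>Pow ?V. - ?t T)"
  proof (rule sum.cong)
    fix T assume T: "T \<in> Pow ?V"
    have r: "restrict (zr \<sigma> (insert i T)) F = restrict (zr \<sigma> T) F"
      using assms(3) by (auto simp: restrict_def zr_def fun_eq_iff)
    have e1: "U - T = insert i (U - insert i T)" and e2: "i \<notin> U - insert i T" using T assms(2) by auto
    have e3: "finite (U - insert i T)" using assms(1) by auto
    have c: "card (U - T) = Suc (card (U - insert i T))"
      unfolding e1 using card_insert_disjoint[OF e3 e2] .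
    have t1: "?t (insert i T) = (-1)^card(U - insert i T) * g (restrict (zr \<sigma> T) F)"
      unfolding r ..
    have t2: "?t T = (-1) * ((-1)^card(U - insert i T) * g (restrict (zr \<sigma> T) F))"
      unfolding c power_Suc by (rule mult.assoc)
    show "?t (insert i T) = - ?t T" unfolding t1 t2 by (simp only: mult_minus1 minus_minus)
  qed simp
  finally have "(\<Sum>T\<in>Pow U. ?t T) = (\<Sum>T\<in>Pow ?V. ?t T) + - (\<Sum>T\<in>Pow ?V. ?t T)"
    by (simp only: sum_negf)
  then show ?thesis by (simp only: add.right_inverse)
qed

lemma regimes_supp: "\<sigma> \<in> regimes d aleph \<Longrightarrow> {i. \<sigma> i \<noteq> 0} \<subseteq> {1..d}"
proof
  fix i assume "\<sigma> \<in> regimes d aleph" "i \<in> {i. \<sigma> i \<noteq> 0}"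
  then show "i \<in> {1..d}" unfolding regimes_def by (cases "i \<in> {1..d}") auto
qed

lemma zr_regimes: "\<sigma> \<in> regimes d aleph \<Longrightarrow> zr \<sigma> T \<in> regimes d aleph"
  by (auto simp: regimes_def zr_def)

lemma comb:
  fixes h :: "nat \<Rightarrow> (nat\<Rightarrow>nat) \<Rightarrow> real"
  assumes fin: "finite K"
    and train: "\<And>\<sigma> k. \<sigma> \<in> regimes d aleph \<Longrightarrow> k \<in> K \<Longrightarrow> {i. \<sigma> i \<noteq> 0} \<subseteq> F k
       \<Longrightarrow> (\<Sum>k\<in>K. h k (restrict \<sigma> (F k))) = 0"
  shows "\<sigma> \<in> regimes d aleph \<Longrightarrow> (\<Sum>k\<in>K. h k (restrict \<sigma> (F k))) = 0"
proof (induction "card {i. \<sigma> i \<noteq> 0}" arbitrary: \<sigma> rule: less_induct)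
  case less
  let ?H = "\<lambda>\<sigma>. (\<Sum>k\<in>K. h k (restrict \<sigma> (F k)))"
  let ?U = "{i. \<sigma> i \<noteq> 0}"
  have fU: "finite ?U" using regimes_supp[OF less.prems] finite_subset by blast
  show ?case
  proof (cases "\<exists>k\<in>K. ?U \<subseteq> F k")
    case True then show ?thesis using train less.prems by blast
  next
    case False
    let ?a = "\<lambda>T. (-1::real)^card(?U-T)"
    have rest: "(\<Sum>T\<in>Pow ?U - {?U}. ?a T * ?H (zr \<sigma> T)) = 0"
    proof (rule sum.neutral, rule ballI)
      fix T assume T: "T \<in> Pow ?U - {?U}"
      have s: "{i. zr \<sigma> T i \<noteq> 0} = T" using T by (auto simp: zr_def)
      have "card T < card ?U" using T fU by (auto intro: psubset_card_mono)
      then have "card {i. zr \<sigma> T i \<noteq> 0} < card ?U" by (simp only: s)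
      then have "?H (zr \<sigma> T) = 0"
        by (rule less.hyps) (rule zr_regimes[OF less.prems])
      then show "?a T * ?H (zr \<sigma> T) = 0" by simp
    qed
    have "0 = (\<Sum>k\<in>K. \<Sum>T\<in>Pow ?U. ?a T * h k (restrict (zr \<sigma> T) (F k)))"
    proof (rule sym, rule sum.neutral, rule ballI)
      fix k assume "k \<in> K"
      then obtain i where "i \<in> ?U" "i \<notin> F k" using False by blast
      then show "(\<Sum>T\<in>Pow ?U. ?a T * h k (restrict (zr \<sigma> T) (F k))) = 0"
        by (rule alt_zero[OF fU])
    qed
    also have "\<dots> = (\<Sum>T\<in>Pow ?U. ?a T * ?H (zr \<sigma> T))"
      by (simp only: sum_distrib_left) (rule sum.swap)
    also have "\<dots> = ?a ?U * ?H (zr \<sigma> ?U) + (\<Sum>T\<in>Pow ?U - {?U}. ?a T * ?H (zr \<sigma> T))"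
      by (rule sum.remove) (use fU in auto)
    also have "\<dots> = ?a ?U * ?H (zr \<sigma> ?U) + 0" unfolding rest ..
    finally have eq0: "0 = ?a ?U * ?H (zr \<sigma> ?U) + 0" .
    have zU: "zr \<sigma> ?U = \<sigma>" by (auto simp: zr_def fun_eq_iff)
    from eq0 have eq: "0 = ?a ?U * ?H \<sigma> + 0" unfolding zU .
    have "?a ?U \<noteq> 0" by simp
    moreover from eq have "?a ?U * ?H \<sigma> = 0" by linarith
    ultimately show ?thesis by (metis mult_eq_0_iff)
  qed
qed



lemma main_aux:
  fixes M :: "(nat \<Rightarrow> 'a) measure"
  assumes vs: "valid_structure m d aleph l S F"
    and St: "Strain \<subseteq> regimes d aleph"
    and tr: "\<forall>k \<in> {1..l}. \<forall>v. (\<forall>i \<in> F k. v i < aleph i) \<longrightarrow>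
           (\<lambda>i. if i \<in> F k then v i else 0) \<in> Strain"
    and ss: "\<sigma>s \<in> regimes d aleph"
    and p: "is_IFM M m d aleph l S F p" and p': "is_IFM M m d aleph l S F p'"
    and agree: "\<forall>\<sigma> \<in> Strain. \<forall>x \<in> space M. p \<sigma> x = p' \<sigma> x"
    and x0: "x0 \<in> space M"
  shows "\<forall>x \<in> space M. p \<sigma>s x = p' \<sigma>s x"
proof -
  obtain f Z where fZ: "\<forall>\<sigma> \<in> regimes d aleph.
          0 < Z \<sigma> \<and>
          (\<forall>k \<in> {1..l}. \<forall>x \<in> space M. 0 < f k (restrict x (S k)) (restrict \<sigma> (F k))) \<and>
          (\<forall>k \<in> {1..l}. (\<lambda>x. f k (restrict x (S k)) (restrict \<sigma> (F k))) \<in> borel_measurable M) \<and>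
          (\<integral>\<^sup>+ x. ennreal (\<Prod>k\<in>{1..l}. f k (restrict x (S k)) (restrict \<sigma> (F k))) \<partial>M) = ennreal (Z \<sigma>) \<and>
          (\<forall>x \<in> space M. p \<sigma> x = (\<Prod>k\<in>{1..l}. f k (restrict x (S k)) (restrict \<sigma> (F k))) / Z \<sigma>)"
    using p unfolding is_IFM_def by blast
  obtain f' Z' where fZ': "\<forall>\<sigma> \<in> regimes d aleph.
          0 < Z' \<sigma> \<and>
          (\<forall>k \<in> {1..l}. \<forall>x \<in> space M. 0 < f' k (restrict x (S k)) (restrict \<sigma> (F k))) \<and>
          (\<forall>k \<in> {1..l}. (\<lambda>x. f' k (restrict x (S k)) (restrict \<sigma> (F k))) \<in> borel_measurable M) \<and>
          (\<integral>\<^sup>+ x. ennreal (\<Prod>k\<in>{1..l}. f' k (restrict x (S k)) (restrict \<sigma> (F k))) \<partial>M) = ennreal (Z' \<sigma>) \<and>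
          (\<forall>x \<in> space M. p' \<sigma> x = (\<Prod>k\<in>{1..l}. f' k (restrict x (S k)) (restrict \<sigma> (F k))) / Z' \<sigma>)"
    using p' unfolding is_IFM_def by blast
  define P where "P \<sigma> y = (\<Prod>k\<in>{1..l}. f k (restrict y (S k)) (restrict \<sigma> (F k)))" for \<sigma> y
  define P' where "P' \<sigma> y = (\<Prod>k\<in>{1..l}. f' k (restrict y (S k)) (restrict \<sigma> (F k)))" for \<sigma> y
  have Ppos: "0 < P \<sigma> y" "0 < P' \<sigma> y" if "\<sigma> \<in> regimes d aleph" "y \<in> space M" for \<sigma> y
    using fZ fZ' that unfolding P_def P'_def by (auto intro!: prod_pos)
  have lnP: "ln (P \<sigma> y) = (\<Sum>k\<in>{1..l}. ln (f k (restrict y (S k)) (restrict \<sigma> (F k))))"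
     "ln (P' \<sigma> y) = (\<Sum>k\<in>{1..l}. ln (f' k (restrict y (S k)) (restrict \<sigma> (F k))))"
    if "\<sigma> \<in> regimes d aleph" "y \<in> space M" for \<sigma> y
  proof -
    have a: "\<forall>k\<in>{1..l}. 0 < f k (restrict y (S k)) (restrict \<sigma> (F k))"
      "\<forall>k\<in>{1..l}. 0 < f' k (restrict y (S k)) (restrict \<sigma> (F k))"
      using fZ fZ' that by blast+
    show "ln (P \<sigma> y) = (\<Sum>k\<in>{1..l}. ln (f k (restrict y (S k)) (restrict \<sigma> (F k))))"
      unfolding P_def by (rule ln_prod) (simp, metis a order_less_irrefl)
    show "ln (P' \<sigma> y) = (\<Sum>k\<in>{1..l}. ln (f' k (restrict y (S k)) (restrict \<sigma> (F k))))"
      unfolding P'_def by (rule ln_prod) (simp, metis a order_less_irrefl)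
  qed
  have key: "ln (P' \<sigma> x) - ln (P \<sigma> x) = ln (P' \<sigma> x0) - ln (P \<sigma> x0)"
    if \<sigma>: "\<sigma> \<in> regimes d aleph" and x: "x \<in> space M" for \<sigma> x
  proof -
    define h where "h k \<tau> = (ln (f' k (restrict x (S k)) \<tau>) - ln (f k (restrict x (S k)) \<tau>))
       - (ln (f' k (restrict x0 (S k)) \<tau>) - ln (f k (restrict x0 (S k)) \<tau>))" for k \<tau>
    have H: "(\<Sum>k\<in>{1..l}. h k (restrict \<sigma> (F k))) =
        (ln (P' \<sigma> x) - ln (P \<sigma> x)) - (ln (P' \<sigma> x0) - ln (P \<sigma> x0))"
      if "\<sigma> \<in> regimes d aleph" for \<sigma>
      unfolding h_def sum_subtractf lnP(1)[OF that x] lnP(2)[OF that x] lnP(1)[OF that x0] lnP(2)[OF that x0] ..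
    have "(\<Sum>k\<in>{1..l}. h k (restrict \<sigma> (F k))) = 0"
    proof (rule comb[where d=d and aleph=aleph], simp)
      fix \<tau> k assume \<tau>: "\<tau> \<in> regimes d aleph" and k: "k \<in> {1..l}" and sub: "{i. \<tau> i \<noteq> 0} \<subseteq> F k"
      have "F k \<subseteq> {1..d}" using vs k unfolding valid_structure_def by auto
      then have "\<forall>i \<in> F k. \<tau> i < aleph i" using \<tau> unfolding regimes_def by auto
      with tr k have "(\<lambda>i. if i \<in> F k then \<tau> i else 0) \<in> Strain" by blast
      moreover have "(\<lambda>i. if i \<in> F k then \<tau> i else 0) = \<tau>" using sub by (auto simp: fun_eq_iff)
      ultimately have tS: "\<tau> \<in> Strain" by simp
      have e: "P \<tau> y / Z \<tau> = P' \<tau> y / Z' \<tau>" if "y \<in> space M" for y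
      proof -
        have "p \<tau> y = p' \<tau> y" using agree tS that by blast
        moreover have "p \<tau> y = P \<tau> y / Z \<tau>" using fZ \<tau> that unfolding P_def by blast
        moreover have "p' \<tau> y = P' \<tau> y / Z' \<tau>" using fZ' \<tau> that unfolding P'_def by blast
        ultimately show ?thesis by simp
      qed
      have l: "ln (P \<tau> y) - ln (Z \<tau>) = ln (P' \<tau> y) - ln (Z' \<tau>)" if "y \<in> space M" for y
      proof -
        have "ln (P \<tau> y / Z \<tau>) = ln (P' \<tau> y / Z' \<tau>)" using e[OF that] by simp
        moreover have "0 < Z \<tau>" "0 < Z' \<tau>" using fZ fZ' \<tau> by blast+
        ultimately show ?thesis
          using ln_divide_pos[OF Ppos(1)[OF \<tau> that], of "Z \<tau>"] ln_divide_pos[OF Ppos(2)[OF \<tau> that], of "Z' \<tau>"]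
          by linarith
      qed
      show "(\<Sum>k\<in>{1..l}. h k (restrict \<tau> (F k))) = 0"
        using H[OF \<tau>] l[OF x] l[OF x0] by linarith
    qed (use \<sigma> in auto)
    with H[OF \<sigma>] show ?thesis by linarith
  qed
  define c where "c = P' \<sigma>s x0 / P \<sigma>s x0"
  have cpos: "0 < c" using Ppos[OF ss x0] unfolding c_def by simp
  have mult: "P' \<sigma>s x = c * P \<sigma>s x" if x: "x \<in> space M" for x
  proof -
    have a1: "ln (c * P \<sigma>s x) = ln c + ln (P \<sigma>s x)" by (rule ln_mult_pos[OF cpos Ppos(1)[OF ss x]])
    have a2: "ln c = ln (P' \<sigma>s x0) - ln (P \<sigma>s x0)"
      unfolding c_def by (rule ln_divide_pos[OF Ppos(2)[OF ss x0] Ppos(1)[OF ss x0]])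
    have "ln (P' \<sigma>s x) = ln (c * P \<sigma>s x)"
      using key[OF ss x] a1 a2 by linarith
    then show ?thesis using ln_inj_iff[OF Ppos(2)[OF ss x] mult_pos_pos[OF cpos Ppos(1)[OF ss x]]] by blast
  qed
  have meas: "(\<lambda>y. P \<sigma>s y) \<in> borel_measurable M"
    unfolding P_def using fZ ss by (auto intro!: borel_measurable_prod)
  have I1: "ennreal (Z' \<sigma>s) = (\<integral>\<^sup>+ y. ennreal (P' \<sigma>s y) \<partial>M)"
    using fZ' ss unfolding P'_def by simp
  have I2: "(\<integral>\<^sup>+ y. ennreal (P' \<sigma>s y) \<partial>M) = (\<integral>\<^sup>+ y. ennreal c * ennreal (P \<sigma>s y) \<partial>M)"
  proof (rule nn_integral_cong)
    fix y assume y: "y \<in> space M"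
    have "0 \<le> c" "0 \<le> P \<sigma>s y" using cpos Ppos(1)[OF ss y] by auto
    then show "ennreal (P' \<sigma>s y) = ennreal c * ennreal (P \<sigma>s y)"
      using mult[OF y] ennreal_mult[of c "P \<sigma>s y"] by simp
  qed
  have meas2: "(\<lambda>y. ennreal (P \<sigma>s y)) \<in> borel_measurable M"
    using measurable_compose[OF meas measurable_ennreal] by (simp add: comp_def)
  have I3: "(\<integral>\<^sup>+ y. ennreal c * ennreal (P \<sigma>s y) \<partial>M) = ennreal c * (\<integral>\<^sup>+ y. ennreal (P \<sigma>s y) \<partial>M)"
    by (rule nn_integral_cmult[OF meas2])
  have I4: "(\<integral>\<^sup>+ y. ennreal (P \<sigma>s y) \<partial>M) = ennreal (Z \<sigma>s)"
    using fZ ss unfolding P_def by simp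
  have Zp: "0 < Z \<sigma>s" "0 < Z' \<sigma>s" using fZ fZ' ss by blast+
  have I5: "ennreal c * ennreal (Z \<sigma>s) = ennreal (c * Z \<sigma>s)"
    using cpos Zp by (simp add: ennreal_mult)
  have "ennreal (Z' \<sigma>s) = ennreal (c * Z \<sigma>s)"
    using I1 I2 I3 I4 I5 by simp
  then have ZZ: "Z' \<sigma>s = c * Z \<sigma>s"
    using cpos Zp by (subst (asm) ennreal_inj) auto
  show ?thesis
  proof
    fix x assume x: "x \<in> space M"
    have "p' \<sigma>s x = P' \<sigma>s x / Z' \<sigma>s" using fZ' ss x unfolding P'_def by simp
    also have "\<dots> = P \<sigma>s x / Z \<sigma>s" unfolding mult[OF x] ZZ using cpos by (rule mult_divide_mult_cancel_left[OF less_imp_neq[symmetric]])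
    also have "\<dots> = p \<sigma>s x" using fZ ss x unfolding P_def by simp
    finally show "p \<sigma>s x = p' \<sigma>s x" by simp
  qed
qed


theorem theorem1:
  fixes M :: "(nat \<Rightarrow> 'a) measure"
    and m d l :: nat
    and aleph :: "nat \<Rightarrow> nat"
    and S F :: "nat \<Rightarrow> nat set"
    and Strain :: "(nat \<Rightarrow> nat) set"
    and \<sigma>s :: "nat \<Rightarrow> nat"
  assumes "valid_structure m d aleph l S F"
    and "decomposable (sigma_edge l F) {1..d}"
    and "Strain \<subseteq> regimes d aleph"
    and "\<forall>k \<in> {1..l}. \<forall>v. (\<forall>i \<in> F k. v i < aleph i) \<longrightarrow>
           (\<lambda>i. if i \<in> F k then v i else 0) \<in> Strain"
    and "\<sigma>s \<in> regimes d aleph"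
  shows "identified M m d aleph l S F Strain \<sigma>s"
  unfolding identified_def
proof (intro allI impI)
  fix p p'
  assume p: "is_IFM M m d aleph l S F p" and p': "is_IFM M m d aleph l S F p'"
    and ag: "\<forall>\<sigma> \<in> Strain. \<forall>x \<in> space M. p \<sigma> x = p' \<sigma> x"
  show "\<forall>x \<in> space M. p \<sigma>s x = p' \<sigma>s x"
  proof (cases "space M = {}")
    case True then show ?thesis by simp
  next
    case False
    then obtain x0 where x0: "x0 \<in> space M" by blast
    show ?thesis by (rule main_aux[OF assms(1) assms(3) assms(4) assms(5) p p' ag x0])
  qed
qed

end
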